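(* Let $(TN,\mu_0)$ be a perpetual $T$-system with regeneration cluster $cl$. Then for any two markings $\mu_1,\mu_2$ reachable in $(TN,\mu_0)$, $$en(TN,\mu_1)=en(TN,\mu_2)\implies\mu_1=\mu_2.$$
   Context: A net consists of finite disjoint sets of places and transitions and directed edges between places and transitions (no place–place or transition–transition edges); nets are weakly connected. ${}^\bullet x$, $x^\bullet$ are pre-set and post-set of a node. A $T$-net is a net in which every place has exactly one pre-transition and exactly one post-transition; a $T$-system is a $T$-net with a marking (map from places to $\mathbb{N}$). A transition is enabled if all its pre-places are marked; firing removes one token from each pre-place and adds one to each post-place. $en(TN,\mu)$ is the set of transitions enabled at $\mu$; reachable markings arise from $\mu_0$ by firing finite sequences of successively enabled transitions. The cluster of a node $x$ is the smallest subnet containing $x$ containing $p^\bullet$ for each of its places $p$ and ${}^\bullet t$ for each of its transitions $t$; $\mu_{cl}$ is the marking equal to $1$ on the places of $cl$ and $0$ elsewhere. $(TN,\mu_0)$ is perpetual with regeneration cluster $cl$ if it is live and bounded and $\mu_{cl}$ is a home marking (reachable from every reachable marking). *)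

theory Defs
  imports Main
begin

definition preset :: "('a \<times> 'a) set \<Rightarrow> 'a \<Rightarrow> 'a set" where
  "preset F x = {y. (y, x) \<in> F}"

definition postset :: "('a \<times> 'a) set \<Rightarrow> 'a \<Rightarrow> 'a set" where
  "postset F x = {y. (x, y) \<in> F}"

definition is_net :: "'a set \<Rightarrow> 'a set \<Rightarrow> ('a \<times> 'a) set \<Rightarrow> bool" where
  "is_net P T F \<longleftrightarrow> finite P \<and> finite T \<and> P \<inter> T = {} \<and>
     F \<subseteq> (P \<times> T) \<union> (T \<times> P) \<and>
     (\<forall>x \<in> P \<union> T. \<forall>y \<in> P \<union> T. (x, y) \<in> (F \<union> F\<inverse>)\<^sup>*)"

definition is_Tnet :: "'a set \<Rightarrow> 'a set \<Rightarrow> ('a \<times> 'a) set \<Rightarrow> bool" where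
  "is_Tnet P T F \<longleftrightarrow> is_net P T F \<and>
     (\<forall>p \<in> P. card (preset F p) = 1 \<and> card (postset F p) = 1)"

definition is_marking :: "'a set \<Rightarrow> ('a \<Rightarrow> nat) \<Rightarrow> bool" where
  "is_marking P \<mu> \<longleftrightarrow> (\<forall>x. x \<notin> P \<longrightarrow> \<mu> x = 0)"

definition enabled :: "'a set \<Rightarrow> ('a \<times> 'a) set \<Rightarrow> ('a \<Rightarrow> nat) \<Rightarrow> 'a \<Rightarrow> bool" where
  "enabled T F \<mu> t \<longleftrightarrow> t \<in> T \<and> (\<forall>p \<in> preset F t. 0 < \<mu> p)"

definition en :: "'a set \<Rightarrow> ('a \<times> 'a) set \<Rightarrow> ('a \<Rightarrow> nat) \<Rightarrow> 'a set" where
  "en T F \<mu> = {t. enabled T F \<mu> t}"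

definition fire :: "('a \<times> 'a) set \<Rightarrow> ('a \<Rightarrow> nat) \<Rightarrow> 'a \<Rightarrow> ('a \<Rightarrow> nat)" where
  "fire F \<mu> t = (\<lambda>p. \<mu> p - (if p \<in> preset F t then 1 else 0)
                         + (if p \<in> postset F t then 1 else 0))"

definition step :: "'a set \<Rightarrow> ('a \<times> 'a) set \<Rightarrow> ('a \<Rightarrow> nat) \<Rightarrow> ('a \<Rightarrow> nat) \<Rightarrow> bool" where
  "step T F \<mu> \<mu>' \<longleftrightarrow> (\<exists>t. enabled T F \<mu> t \<and> \<mu>' = fire F \<mu> t)"

definition reach :: "'a set \<Rightarrow> ('a \<times> 'a) set \<Rightarrow> ('a \<Rightarrow> nat) \<Rightarrow> ('a \<Rightarrow> nat) \<Rightarrow> bool" where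
  "reach T F = (step T F)\<^sup>*\<^sup>*"

definition live :: "'a set \<Rightarrow> ('a \<times> 'a) set \<Rightarrow> ('a \<Rightarrow> nat) \<Rightarrow> bool" where
  "live T F \<mu>0 \<longleftrightarrow> (\<forall>\<mu> t. reach T F \<mu>0 \<mu> \<and> t \<in> T \<longrightarrow>
      (\<exists>\<mu>'. reach T F \<mu> \<mu>' \<and> enabled T F \<mu>' t))"

definition bounded :: "'a set \<Rightarrow> 'a set \<Rightarrow> ('a \<times> 'a) set \<Rightarrow> ('a \<Rightarrow> nat) \<Rightarrow> bool" where
  "bounded P T F \<mu>0 \<longleftrightarrow> (\<exists>k. \<forall>\<mu> p. reach T F \<mu>0 \<mu> \<and> p \<in> P \<longrightarrow> \<mu> p \<le> k)"

definition home_marking :: "'a set \<Rightarrow> ('a \<times> 'a) set \<Rightarrow> ('a \<Rightarrow> nat) \<Rightarrow> ('a \<Rightarrow> nat) \<Rightarrow> bool" where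
  "home_marking T F \<mu>0 \<mu>h \<longleftrightarrow> (\<forall>\<mu>. reach T F \<mu>0 \<mu> \<longrightarrow> reach T F \<mu> \<mu>h)"

inductive_set cluster :: "'a set \<Rightarrow> 'a set \<Rightarrow> ('a \<times> 'a) set \<Rightarrow> 'a \<Rightarrow> 'a set"
  for P T F x where
  self: "x \<in> cluster P T F x"
| post: "p \<in> cluster P T F x \<Longrightarrow> p \<in> P \<Longrightarrow> y \<in> postset F p \<Longrightarrow> y \<in> cluster P T F x"
| pre: "t \<in> cluster P T F x \<Longrightarrow> t \<in> T \<Longrightarrow> y \<in> preset F t \<Longrightarrow> y \<in> cluster P T F x"

definition mu_cl :: "'a set \<Rightarrow> 'a set \<Rightarrow> 'a \<Rightarrow> nat" where
  "mu_cl P cl = (\<lambda>p. if p \<in> P \<and> p \<in> cl then 1 else 0)"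

definition perpetual :: "'a set \<Rightarrow> 'a set \<Rightarrow> ('a \<times> 'a) set \<Rightarrow> ('a \<Rightarrow> nat) \<Rightarrow> 'a set \<Rightarrow> bool" where
  "perpetual P T F \<mu>0 cl \<longleftrightarrow> (\<exists>x \<in> P \<union> T. cl = cluster P T F x) \<and>
     live T F \<mu>0 \<and> bounded P T F \<mu>0 \<and> home_marking T F \<mu>0 (mu_cl P cl)"

end

theory Submission imports Defs begin

definition pt :: "('a \<times> 'a) set \<Rightarrow> 'a \<Rightarrow> 'a" where "pt F p = (THE t. (t, p) \<in> F)"
definition qt :: "('a \<times> 'a) set \<Rightarrow> 'a \<Rightarrow> 'a" where "qt F p = (THE t. (p, t) \<in> F)"

fun fires :: "'a set \<Rightarrow> ('a \<times> 'a) set \<Rightarrow> ('a \<Rightarrow> nat) \<Rightarrow> 'a list \<Rightarrow> ('a \<Rightarrow> nat) \<Rightarrow> bool" where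
  "fires T F \<mu> [] \<mu>' = (\<mu>' = \<mu>)"
| "fires T F \<mu> (t # ts) \<mu>' = (enabled T F \<mu> t \<and> fires T F (fire F \<mu> t) ts \<mu>')"

lemma fires_append: "fires T F \<mu> (xs @ ys) \<mu>'' \<longleftrightarrow> (\<exists>\<mu>'. fires T F \<mu> xs \<mu>' \<and> fires T F \<mu>' ys \<mu>'')"
  by (induction xs arbitrary: \<mu>) auto

lemma fires_reach: "fires T F \<mu> ts \<mu>' \<Longrightarrow> reach T F \<mu> \<mu>'"
proof (induction ts arbitrary: \<mu>)
  case Nil then show ?case by (simp add: reach_def)
next
  case (Cons t ts)
  then have "step T F \<mu> (fire F \<mu> t)" "reach T F (fire F \<mu> t) \<mu>'" by (auto simp: step_def)
  then show ?case unfolding reach_def by (meson converse_rtranclp_into_rtranclp)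
qed

lemma reach_fires: "reach T F \<mu> \<mu>' \<Longrightarrow> \<exists>ts. fires T F \<mu> ts \<mu>'"
  unfolding reach_def
proof (induction rule: rtranclp_induct)
  case base then show ?case by (intro exI[of _ "[]"]) simp
next
  case (step y z)
  then obtain ts t where "fires T F \<mu> ts y" "enabled T F y t" "z = fire F y t" by (auto simp: step_def)
  then have "fires T F \<mu> (ts @ [t]) z" by (auto simp: fires_append)
  then show ?case by blast
qed

lemma reach_trans: "reach T F a b \<Longrightarrow> reach T F b c \<Longrightarrow> reach T F a c"
  unfolding reach_def by simp

lemma reach_zero_outside:
  assumes "F \<subseteq> (P \<times> T) \<union> (T \<times> P)" "P \<inter> T = {}" "reach T F \<mu>0 \<mu>" "is_marking P \<mu>0" "x \<notin> P"
  shows "\<mu> x = 0"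
  using assms(3)
  unfolding reach_def
proof (induction rule: rtranclp_induct)
  case base then show ?case using assms(4,5) by (simp add: is_marking_def)
next
  case (step y z)
  then obtain t where t: "enabled T F y t" "z = fire F y t" by (auto simp: step_def)
  then have "t \<in> T" by (simp add: enabled_def)
  then have "x \<notin> preset F t" "x \<notin> postset F t" using assms(1,2,5) by (auto simp: preset_def postset_def)
  then show ?case using t step.IH by (simp add: fire_def)
qed

locale tnet =
  fixes P T :: "'a set" and F :: "('a \<times> 'a) set"
  assumes tn: "is_Tnet P T F"
begin

lemma finP: "finite P" and finT: "finite T" and disj: "P \<inter> T = {}"
  and Fsub: "F \<subseteq> (P \<times> T) \<union> (T \<times> P)"
  and conn: "\<And>x y. x \<in> P \<union> T \<Longrightarrow> y \<in> P \<union> T \<Longrightarrow> (x, y) \<in> (F \<union> F\<inverse>)\<^sup>*"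
  using tn by (auto simp: is_Tnet_def is_net_def)

lemma pre1: "p \<in> P \<Longrightarrow> preset F p = {pt F p}"
proof -
  assume "p \<in> P"
  then have "card (preset F p) = 1" using tn by (simp add: is_Tnet_def)
  then obtain t where t: "preset F p = {t}" by (auto simp: card_1_singleton_iff)
  then have "(THE t. (t, p) \<in> F) = t" by (auto simp: preset_def)
  then show ?thesis using t by (simp add: pt_def)
qed

lemma post1: "p \<in> P \<Longrightarrow> postset F p = {qt F p}"
proof -
  assume "p \<in> P"
  then have "card (postset F p) = 1" using tn by (simp add: is_Tnet_def)
  then obtain t where t: "postset F p = {t}" by (auto simp: card_1_singleton_iff)
  then have "(THE t. (p, t) \<in> F) = t" by (auto simp: postset_def)
  then show ?thesis using t by (simp add: qt_def)
qed

lemma inF_pre: "p \<in> P \<Longrightarrow> (t, p) \<in> F \<longleftrightarrow> t = pt F p"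
  using pre1[of p] by (auto simp: preset_def)

lemma inF_post: "p \<in> P \<Longrightarrow> (p, t) \<in> F \<longleftrightarrow> t = qt F p"
  using post1[of p] by (auto simp: postset_def)

lemma ptT: "p \<in> P \<Longrightarrow> pt F p \<in> T"
  using inF_pre[of p "pt F p"] Fsub disj by auto

lemma qtT: "p \<in> P \<Longrightarrow> qt F p \<in> T"
  using inF_post[of p "qt F p"] Fsub disj by auto

lemma preset_T: "t \<in> T \<Longrightarrow> q \<in> preset F t \<longleftrightarrow> q \<in> P \<and> qt F q = t"
  using Fsub disj inF_post by (auto simp: preset_def)

lemma postset_T: "t \<in> T \<Longrightarrow> q \<in> postset F t \<longleftrightarrow> q \<in> P \<and> pt F q = t"
  using Fsub disj inF_pre by (auto simp: postset_def)

lemma fire_P: "t \<in> T \<Longrightarrow> p \<in> P \<Longrightarrow>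
   fire F \<mu> t p = \<mu> p - (if qt F p = t then 1 else 0) + (if pt F p = t then 1 else 0)"
  by (simp add: fire_def preset_T postset_T)

lemma enabled_T: "enabled T F \<mu> t \<longleftrightarrow> t \<in> T \<and> (\<forall>q\<in>P. qt F q = t \<longrightarrow> 0 < \<mu> q)"
  by (auto simp: enabled_def preset_T)

lemma mark_eq:
  "fires T F \<mu> ts \<mu>' \<Longrightarrow> p \<in> P \<Longrightarrow>
   int (\<mu>' p) = int (\<mu> p) + int (count_list ts (pt F p)) - int (count_list ts (qt F p))"
proof (induction ts arbitrary: \<mu>)
  case Nil then show ?case by simp
next
  case (Cons t ts)
  then have en: "enabled T F \<mu> t" and f: "fires T F (fire F \<mu> t) ts \<mu>'" by auto
  then have tT: "t \<in> T" by (simp add: enabled_def)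
  have IH: "int (\<mu>' p) = int (fire F \<mu> t p) + int (count_list ts (pt F p)) - int (count_list ts (qt F p))"
    using Cons f by blast
  have "qt F p = t \<Longrightarrow> 0 < \<mu> p" using en Cons.prems(2) by (simp add: enabled_T)
  then have "int (fire F \<mu> t p) = int (\<mu> p) - (if qt F p = t then 1 else 0) + (if pt F p = t then 1 else 0)"
    using fire_P[OF tT Cons.prems(2)] by auto
  then show ?case using IH by auto
qed

end

definition cm :: "'a set \<Rightarrow> ('a \<times> 'a) set \<Rightarrow> 'a \<Rightarrow> 'a \<Rightarrow> nat" where
  "cm P F t0 = (\<lambda>p. if p \<in> P \<and> qt F p = t0 then 1 else 0)"

locale tsys = tnet P T F for P T :: "'a set" and F +
  fixes \<mu>0 :: "'a \<Rightarrow> nat" and t0 :: 'a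
  assumes mark0: "is_marking P \<mu>0" and liv: "live T F \<mu>0" and bnd: "bounded P T F \<mu>0"
    and t0T: "t0 \<in> T" and home: "home_marking T F \<mu>0 (cm P F t0)" and Pne: "P \<noteq> {}"
begin

lemma no_source: assumes "t \<in> T" "preset F t = {}" "q \<in> postset F t" shows False
proof -
  have qP: "q \<in> P" and pq: "pt F q = t" using assms postset_T by auto
  have "\<exists>\<nu>. reach T F \<mu>0 \<nu> \<and> k \<le> \<nu> q" for k
  proof (induction k)
    case 0 then show ?case by (intro exI[of _ \<mu>0]) (simp add: reach_def)
  next
    case (Suc k)
    then obtain \<nu> where \<nu>: "reach T F \<mu>0 \<nu>" "k \<le> \<nu> q" by blast
    have en: "enabled T F \<nu> t" using assms by (simp add: enabled_def)
    then have "step T F \<nu> (fire F \<nu> t)" by (auto simp: step_def)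
    then have "reach T F \<mu>0 (fire F \<nu> t)" using \<nu> by (simp add: reach_def)
    moreover have "fire F \<nu> t q = \<nu> q + 1" using assms(2,3) by (simp add: fire_def)
    ultimately show ?case using \<nu> by (intro exI[of _ "fire F \<nu> t"]) auto
  qed
  moreover obtain K where "\<forall>\<mu> p. reach T F \<mu>0 \<mu> \<and> p \<in> P \<longrightarrow> \<mu> p \<le> K"
    using bnd by (auto simp: bounded_def)
  ultimately show False using qP by (meson not_less_eq_eq)
qed

lemma preset_ne: assumes "t \<in> T" shows "preset F t \<noteq> {}"
proof
  assume e: "preset F t = {}"
  obtain p where p: "p \<in> P" using Pne by auto
  have "(t, p) \<in> (F \<union> F\<inverse>)\<^sup>*" using conn assms p by auto
  moreover have "t \<noteq> p" using disj assms p by auto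
  ultimately obtain y where "(t, y) \<in> F \<union> F\<inverse>" by (metis converse_rtranclE)
  then have "y \<in> postset F t \<or> y \<in> preset F t" by (auto simp: preset_def postset_def)
  then show False using e no_source assms by auto
qed

lemma ex_pre: "t \<in> T \<Longrightarrow> \<exists>q\<in>P. qt F q = t"
  using preset_ne preset_T by blast

lemma cut:
  assumes "M \<subseteq> T" "t \<in> M" "t' \<in> T" "t' \<notin> M"
  shows "\<exists>p\<in>P. (pt F p \<in> M) \<noteq> (qt F p \<in> M)"
proof (rule ccontr)
  assume h: "\<not> ?thesis"
  define S where "S = M \<union> {p\<in>P. qt F p \<in> M}"
  have "(t, y) \<in> (F \<union> F\<inverse>)\<^sup>* \<Longrightarrow> y \<in> S" for y
  proof (induction rule: rtrancl_induct)
    case base then show ?case using assms by (simp add: S_def)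
  next
    case (step y z)
    from step.hyps(2) show ?case
    proof
      assume yz: "(y, z) \<in> F"
      then consider "y \<in> P" "z \<in> T" | "y \<in> T" "z \<in> P" using Fsub by auto
      then show ?thesis
      proof cases
        case 1
        then have "z = qt F y" using inF_post yz by auto
        moreover have "y \<notin> M" using 1 assms(1) disj by auto
        ultimately show ?thesis using step.IH 1 by (auto simp: S_def)
      next
        case 2
        then have "y = pt F z" using inF_pre yz by auto
        moreover have "y \<in> M" using 2 step.IH disj by (auto simp: S_def)
        ultimately show ?thesis using h 2 by (auto simp: S_def)
      qed
    next
      assume yz: "(y, z) \<in> F\<inverse>"
      then have zy: "(z, y) \<in> F" by simp
      then consider "z \<in> P" "y \<in> T" | "z \<in> T" "y \<in> P" using Fsub by auto
      then show ?thesis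
      proof cases
        case 1
        then have "y = qt F z" using inF_post zy by auto
        moreover have "y \<in> M" using 1 step.IH disj by (auto simp: S_def)
        ultimately show ?thesis using 1 by (auto simp: S_def)
      next
        case 2
        then have "z = pt F y" using inF_pre zy by auto
        moreover have "qt F y \<in> M" using 2 step.IH disj assms(1) by (auto simp: S_def)
        ultimately show ?thesis using h 2 by (auto simp: S_def)
      qed
    qed
  qed
  moreover have "(t, t') \<in> (F \<union> F\<inverse>)\<^sup>*" using conn assms by auto
  ultimately have "t' \<in> S" by blast
  then show False using assms disj by (auto simp: S_def)
qed

lemma potential:
  assumes "reach T F \<mu>0 \<mu>"
  shows "\<exists>Z::'a\<Rightarrow>int. Z t0 = 0 \<and> (\<forall>p\<in>P. int (\<mu> p) = int (cm P F t0 p) + Z (pt F p) - Z (qt F p))"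
proof -
  have "reach T F \<mu> (cm P F t0)" using home assms by (simp add: home_marking_def)
  then obtain ts where ts: "fires T F \<mu> ts (cm P F t0)" using reach_fires by blast
  define Z where "Z = (\<lambda>t. int (count_list ts t0) - int (count_list ts t))"
  have "int (\<mu> p) = int (cm P F t0 p) + Z (pt F p) - Z (qt F p)" if "p \<in> P" for p
    using mark_eq[OF ts that] by (simp add: Z_def)
  then show ?thesis by (intro exI[of _ Z]) (simp add: Z_def)
qed

end

context tsys begin

abbreviation "pot \<mu> Z \<equiv> Z t0 = 0 \<and> (\<forall>p\<in>P. int (\<mu> p) = int (cm P F t0 p) + Z (pt F p) - Z (qt F p))"

lemma cm_P: "p \<in> P \<Longrightarrow> int (cm P F t0 p) = (if qt F p = t0 then 1 else 0)"
  by (simp add: cm_def)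

lemma upper:
  assumes r: "reach T F \<mu>0 \<mu>" and Z: "pot \<mu> Z" and tT: "t \<in> T"
  shows "Z t \<le> 0"
proof (rule ccontr)
  assume "\<not> Z t \<le> 0"
  define m where "m = Max (Z ` T)"
  have mge: "Z s \<le> m" if "s \<in> T" for s using finT that by (simp add: m_def)
  have "m \<in> Z ` T" using finT tT unfolding m_def by (intro Max_in) auto
  then obtain tm where tm: "tm \<in> T" "Z tm = m" by auto
  have mpos: "m > 0" using mge[OF tT] \<open>\<not> Z t \<le> 0\<close> by simp
  define M where "M = {s\<in>T. Z s = m}"
  have t0M: "t0 \<notin> M" using Z mpos by (simp add: M_def)
  have A: "pt F p \<in> M \<and> \<mu> p = 0" if "p \<in> P" "qt F p \<in> M" for p
  proof -
    have "qt F p \<noteq> t0" using t0M that by auto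
    then have "int (\<mu> p) = Z (pt F p) - m" using Z that cm_P[of p] by (auto simp: M_def)
    moreover have "Z (pt F p) \<le> m" using mge ptT that by auto
    ultimately show ?thesis using ptT that by (auto simp: M_def)
  qed
  have "reach T F \<mu> \<nu> \<Longrightarrow> \<forall>p\<in>P. qt F p \<in> M \<longrightarrow> \<nu> p = 0" for \<nu>
    unfolding reach_def
  proof (induction rule: rtranclp_induct)
    case base then show ?case using A by auto
  next
    case (step y z)
    then obtain s where s: "enabled T F y s" "z = fire F y s" by (auto simp: step_def)
    have sT: "s \<in> T" using s by (simp add: enabled_def)
    have "s \<notin> M"
    proof
      assume "s \<in> M"
      obtain q where "q \<in> P" "qt F q = s" using ex_pre sT by blast
      then show False using s(1) step.IH \<open>s \<in> M\<close> by (auto simp: enabled_T)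
    qed
    show ?case
    proof (intro ballI impI)
      fix p assume p: "p \<in> P" "qt F p \<in> M"
      then have "pt F p \<noteq> s" "qt F p \<noteq> s" using A \<open>s \<notin> M\<close> by auto
      then show "z p = 0" using fire_P[OF sT p(1)] s step.IH p by auto
    qed
  qed
  note inv = this
  obtain \<nu> where \<nu>: "reach T F \<mu> \<nu>" "enabled T F \<nu> tm"
    using liv r tm unfolding live_def by blast
  obtain q where q: "q \<in> P" "qt F q = tm" using ex_pre tm by blast
  have "\<nu> q = 0" using inv[OF \<nu>(1)] q tm by (auto simp: M_def)
  then show False using \<nu>(2) q by (auto simp: enabled_T)
qed

lemma project:
  assumes bc: "\<forall>q\<in>P. qt F q \<in> N \<longrightarrow> pt F q \<in> N"
  shows "fires T F \<nu>1 ts \<nu>1' \<Longrightarrow> (\<forall>q\<in>P. qt F q \<in> N \<longrightarrow> \<nu>1 q = \<nu>2 q) \<Longrightarrow>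
    \<exists>\<nu>2'. fires T F \<nu>2 (filter (\<lambda>t. t \<in> N) ts) \<nu>2' \<and> (\<forall>q\<in>P. qt F q \<in> N \<longrightarrow> \<nu>1' q = \<nu>2' q)"
proof (induction ts arbitrary: \<nu>1 \<nu>2)
  case Nil then show ?case by auto
next
  case (Cons t ts)
  then have en: "enabled T F \<nu>1 t" and f: "fires T F (fire F \<nu>1 t) ts \<nu>1'" by auto
  have tT: "t \<in> T" using en by (simp add: enabled_def)
  show ?case
  proof (cases "t \<in> N")
    case True
    have en2: "enabled T F \<nu>2 t" using en Cons.prems(2) True by (auto simp: enabled_T)
    have "\<forall>q\<in>P. qt F q \<in> N \<longrightarrow> fire F \<nu>1 t q = fire F \<nu>2 t q"
      using Cons.prems(2) by (simp add: fire_P[OF tT])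
    then obtain \<nu>2' where "fires T F (fire F \<nu>2 t) (filter (\<lambda>t. t \<in> N) ts) \<nu>2'"
        "\<forall>q\<in>P. qt F q \<in> N \<longrightarrow> \<nu>1' q = \<nu>2' q"
      using Cons.IH[OF f] by blast
    then show ?thesis using True en2 by (intro exI[of _ \<nu>2']) auto
  next
    case False
    have "\<forall>q\<in>P. qt F q \<in> N \<longrightarrow> fire F \<nu>1 t q = \<nu>2 q"
      using Cons.prems(2) bc False by (auto simp: fire_P[OF tT])
    then show ?thesis using Cons.IH[OF f] False by simp
  qed
qed

lemma pump:
  assumes N: "N \<subseteq> T" and bc: "\<forall>q\<in>P. qt F q \<in> N \<longrightarrow> pt F q \<in> N" and a: "a \<in> N"
    and r: "reach T F \<mu>0 \<mu>"
  shows "\<exists>ts \<nu>. fires T F \<mu> ts \<nu> \<and> set ts \<subseteq> N \<and> k \<le> count_list ts a"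
proof (induction k)
  case 0 then show ?case by (intro exI[of _ "[]"]) auto
next
  case (Suc k)
  then obtain ts \<nu> where h: "fires T F \<mu> ts \<nu>" "set ts \<subseteq> N" "k \<le> count_list ts a" by blast
  have "reach T F \<mu>0 \<nu>" using r fires_reach[OF h(1)] reach_trans by blast
  then obtain \<nu>' where "reach T F \<nu> \<nu>'" "enabled T F \<nu>' a" using liv a N unfolding live_def by blast
  then obtain ts' where ts': "fires T F \<nu> ts' \<nu>'" "enabled T F \<nu>' a" using reach_fires by blast
  obtain \<nu>'' where \<nu>'': "fires T F \<nu> (filter (\<lambda>t. t \<in> N) ts') \<nu>''"
    "\<forall>q\<in>P. qt F q \<in> N \<longrightarrow> \<nu>' q = \<nu>'' q"
    using project[OF bc ts'(1)] by blast
  have "enabled T F \<nu>'' a" using ts'(2) \<nu>''(2) a by (auto simp: enabled_T)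
  then have "fires T F \<nu> (filter (\<lambda>t. t \<in> N) ts' @ [a]) (fire F \<nu>'' a)"
    using \<nu>''(1) by (auto simp: fires_append)
  then have "fires T F \<mu> (ts @ filter (\<lambda>t. t \<in> N) ts' @ [a]) (fire F \<nu>'' a)"
    using h(1) fires_append by blast
  moreover have "set (ts @ filter (\<lambda>t. t \<in> N) ts' @ [a]) \<subseteq> N" using h(2) a by auto
  moreover have "Suc k \<le> count_list (ts @ filter (\<lambda>t. t \<in> N) ts' @ [a]) a" using h(3) by simp
  ultimately show ?case by blast
qed

lemma lower:
  assumes r: "reach T F \<mu>0 \<mu>" and Z: "pot \<mu> Z" and tT: "t \<in> T"
  shows "Z t \<ge> -1"
proof (rule ccontr)
  assume "\<not> Z t \<ge> -1"
  define m where "m = Min (Z ` T)"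
  have mle: "m \<le> Z s" if "s \<in> T" for s using finT that by (simp add: m_def)
  have "m \<in> Z ` T" using finT tT unfolding m_def by (intro Min_in) auto
  then obtain tm where tm: "tm \<in> T" "Z tm = m" by auto
  have mneg: "m \<le> -2" using mle[OF tT] \<open>\<not> Z t \<ge> -1\<close> by simp
  define M where "M = {s\<in>T. Z s = m}"
  have t0M: "t0 \<notin> M" using Z mneg by (simp add: M_def)
  have B: "qt F p \<in> M" if "p \<in> P" "pt F p \<in> M" for p
  proof (rule ccontr)
    assume nq: "qt F p \<notin> M"
    have "Z (qt F p) > m" using nq mle qtT that by (force simp: M_def)
    moreover have "int (\<mu> p) = int (cm P F t0 p) + m - Z (qt F p)" using Z that by (simp add: M_def)
    ultimately show False using cm_P[OF that(1)] Z mneg by (auto split: if_splits)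
  qed
  obtain p where p: "p \<in> P" "(pt F p \<in> M) \<noteq> (qt F p \<in> M)"
    using cut[of M tm t0] tm t0M t0T by (auto simp: M_def)
  then have pa: "pt F p \<notin> M" "qt F p \<in> M" using B by auto
  define N where "N = T - M"
  have bc: "\<forall>q\<in>P. qt F q \<in> N \<longrightarrow> pt F q \<in> N" using B ptT by (auto simp: N_def)
  have aN: "pt F p \<in> N" using pa ptT p by (auto simp: N_def)
  have bN: "qt F p \<notin> N" using pa by (auto simp: N_def)
  obtain K where K: "\<forall>\<mu> p. reach T F \<mu>0 \<mu> \<and> p \<in> P \<longrightarrow> \<mu> p \<le> K"
    using bnd by (auto simp: bounded_def)
  obtain ts \<nu> where h: "fires T F \<mu> ts \<nu>" "set ts \<subseteq> N" "Suc K \<le> count_list ts (pt F p)"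
    using pump[OF _ bc aN r, of "Suc K"] by (auto simp: N_def)
  have "count_list ts (qt F p) = 0" using h(2) bN by (auto simp: count_list_0_iff)
  then have "int (\<nu> p) = int (\<mu> p) + int (count_list ts (pt F p))" using mark_eq[OF h(1) p(1)] by simp
  then have "\<nu> p > K" using h(3) by simp
  moreover have "reach T F \<mu>0 \<nu>" using r fires_reach[OF h(1)] reach_trans by blast
  ultimately show False using K p(1) by (meson not_le)
qed

lemma core:
  assumes r1: "reach T F \<mu>0 \<mu>1" and r2: "reach T F \<mu>0 \<mu>2"
    and Z1: "pot \<mu>1 Z1" and Z2: "pot \<mu>2 Z2" and en: "en T F \<mu>1 = en T F \<mu>2"
  shows "\<forall>t\<in>T. Z1 t = -1 \<longrightarrow> Z2 t = -1"
proof (rule ccontr)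
  assume nt: "\<not> (\<forall>t\<in>T. Z1 t = -1 \<longrightarrow> Z2 t = -1)"
  define A where "A = {t\<in>T. Z1 t = -1 \<and> Z2 t \<noteq> -1}"
  have A0: "Z1 t = -1 \<and> Z2 t = 0 \<and> t \<noteq> t0" if "t \<in> A" for t
    using that upper[OF r2 Z2] lower[OF r2 Z2] Z1 by (force simp: A_def)
  have AT: "A \<subseteq> T" by (auto simp: A_def)
  have Ane: "A \<noteq> {}" using nt by (auto simp: A_def)
  show False
  proof (cases "\<exists>t\<in>A. \<forall>q\<in>P. qt F q = t \<longrightarrow> pt F q \<notin> A")
    case True
    then obtain t where t: "t \<in> A" "\<forall>q\<in>P. qt F q = t \<longrightarrow> pt F q \<notin> A" by blast
    have tT: "t \<in> T" using t AT by auto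
    have "0 < \<mu>1 q" if q: "q \<in> P" "qt F q = t" for q
    proof -
      have pT: "pt F q \<in> T" using ptT q by auto
      have e1: "int (\<mu>1 q) = Z1 (pt F q) + 1" using Z1 q A0[OF t(1)] cm_P[OF q(1)] by auto
      have e2: "int (\<mu>2 q) = Z2 (pt F q)" using Z2 q A0[OF t(1)] cm_P[OF q(1)] by auto
      have "Z1 (pt F q) \<noteq> -1"
      proof
        assume h: "Z1 (pt F q) = -1"
        then have "Z2 (pt F q) = -1" using t(2) q pT by (auto simp: A_def)
        then show False using e2 by simp
      qed
      then have "Z1 (pt F q) = 0" using upper[OF r1 Z1 pT] lower[OF r1 Z1 pT] by simp
      then show ?thesis using e1 by simp
    qed
    then have "enabled T F \<mu>1 t" using tT by (simp add: enabled_T)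
    then have "enabled T F \<mu>2 t" using en by (simp add: en_def set_eq_iff)
    moreover obtain q where q: "q \<in> P" "qt F q = t" using ex_pre tT by blast
    moreover have "int (\<mu>2 q) = Z2 (pt F q)" using Z2 q A0[OF t(1)] cm_P[OF q(1)] by auto
    moreover have "Z2 (pt F q) \<le> 0" using upper[OF r2 Z2] ptT q by auto
    ultimately show False by (auto simp: enabled_T)
  next
    case False
    then have cyc: "\<forall>t\<in>A. \<exists>q\<in>P. qt F q = t \<and> pt F q \<in> A" by blast
    have "reach T F \<mu>1 \<nu> \<Longrightarrow> \<forall>q\<in>P. qt F q \<in> A \<and> pt F q \<in> A \<longrightarrow> \<nu> q = 0" for \<nu>
      unfolding reach_def
    proof (induction rule: rtranclp_induct)
      case base
      show ?case
      proof (intro ballI impI)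
        fix q assume q: "q \<in> P" "qt F q \<in> A \<and> pt F q \<in> A"
        then show "\<mu>1 q = 0" using Z1 A0 cm_P[OF q(1)] by force
      qed
    next
      case (step y z)
      then obtain s where s: "enabled T F y s" "z = fire F y s" by (auto simp: step_def)
      have sT: "s \<in> T" using s by (simp add: enabled_def)
      have "s \<notin> A"
      proof
        assume "s \<in> A"
        then obtain q where "q \<in> P" "qt F q = s" "pt F q \<in> A" using cyc by blast
        then show False using s(1) step.IH \<open>s \<in> A\<close> by (auto simp: enabled_T)
      qed
      show ?case
      proof (intro ballI impI)
        fix p assume p: "p \<in> P" "qt F p \<in> A \<and> pt F p \<in> A"
        then have "pt F p \<noteq> s" "qt F p \<noteq> s" using \<open>s \<notin> A\<close> by auto
        then show "z p = 0" using fire_P[OF sT p(1)] s step.IH p by auto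
      qed
    qed
    note inv = this
    obtain t where t: "t \<in> A" using Ane by auto
    obtain \<nu> where \<nu>: "reach T F \<mu>1 \<nu>" "enabled T F \<nu> t"
      using liv r1 t AT unfolding live_def by blast
    obtain q where q: "q \<in> P" "qt F q = t" "pt F q \<in> A" using cyc t by blast
    have "\<nu> q = 0" using inv[OF \<nu>(1)] q t by auto
    then show False using \<nu>(2) q by (auto simp: enabled_T)
  qed
qed

lemma lucent:
  assumes r1: "reach T F \<mu>0 \<mu>1" and r2: "reach T F \<mu>0 \<mu>2" and en: "en T F \<mu>1 = en T F \<mu>2"
  shows "\<mu>1 = \<mu>2"
proof
  fix x
  obtain Z1 where Z1: "pot \<mu>1 Z1" using potential[OF r1] by blast
  obtain Z2 where Z2: "pot \<mu>2 Z2" using potential[OF r2] by blast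
  have c1: "\<forall>t\<in>T. Z1 t = -1 \<longrightarrow> Z2 t = -1" using core[OF r1 r2 Z1 Z2 en] .
  have c2: "\<forall>t\<in>T. Z2 t = -1 \<longrightarrow> Z1 t = -1" using core[OF r2 r1 Z2 Z1 en[symmetric]] .
  have eq: "Z1 t = Z2 t" if "t \<in> T" for t
    using c1 c2 that upper[OF r1 Z1 that] lower[OF r1 Z1 that] upper[OF r2 Z2 that] lower[OF r2 Z2 that]
    by force
  show "\<mu>1 x = \<mu>2 x"
  proof (cases "x \<in> P")
    case True
    then have "int (\<mu>1 x) = int (\<mu>2 x)" using Z1 Z2 eq ptT qtT by auto
    then show ?thesis by simp
  next
    case False
    then show ?thesis using reach_zero_outside[OF Fsub disj r1 mark0] reach_zero_outside[OF Fsub disj r2 mark0]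
      by simp
  qed
qed

end

context tnet begin
lemma cluster_char:
  assumes x: "x \<in> P \<union> T" and t0: "t0 = (if x \<in> T then x else qt F x)"
  shows "mu_cl P (cluster P T F x) = cm P F t0" and "t0 \<in> T"
proof -
  show t0T: "t0 \<in> T" using x t0 qtT by auto
  have inv: "y = x \<or> y = t0 \<or> (y \<in> P \<and> qt F y = t0)" if "y \<in> cluster P T F x" for y
    using that
  proof (induction rule: cluster.induct)
    case self then show ?case by simp
  next
    case (post p y)
    have "y = qt F p" using post.hyps(3) post1[OF post.hyps(2)] by auto
    then show ?case using post.IH post.hyps(2) t0 disj t0T by auto
  next
    case (pre t y)
    have "t = t0" using pre.IH pre.hyps(2) t0 disj x by auto
    then show ?case using pre.hyps preset_T by auto
  qed
  have t0cl: "t0 \<in> cluster P T F x"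
  proof (cases "x \<in> T")
    case True then show ?thesis using t0 cluster.self by simp
  next
    case False
    then have "x \<in> P" using x by auto
    then show ?thesis using t0 False cluster.post[OF cluster.self, of x] post1 by auto
  qed
  show "mu_cl P (cluster P T F x) = cm P F t0"
  proof
    fix p
    show "mu_cl P (cluster P T F x) p = cm P F t0 p"
    proof (cases "p \<in> P")
      case True
      have "p \<in> cluster P T F x \<longleftrightarrow> qt F p = t0"
      proof
        assume "p \<in> cluster P T F x"
        then show "qt F p = t0" using inv[of p] True t0 disj t0T by (cases "p = x") auto
      next
        assume "qt F p = t0"
        then have "p \<in> preset F t0" using preset_T t0T True by auto
        then show "p \<in> cluster P T F x" using cluster.pre[OF t0cl t0T] by blast
      qed
      then show ?thesis using True by (simp add: mu_cl_def cm_def)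
    next
      case False then show ?thesis by (simp add: mu_cl_def cm_def)
    qed
  qed
qed
end

theorem proposition5p2:
  fixes P T :: "'a set" and F :: "('a \<times> 'a) set"
    and \<mu>0 \<mu>1 \<mu>2 :: "'a \<Rightarrow> nat" and cl :: "'a set"
  assumes "is_Tnet P T F"
    and "is_marking P \<mu>0"
    and "perpetual P T F \<mu>0 cl"
    and "reach T F \<mu>0 \<mu>1"
    and "reach T F \<mu>0 \<mu>2"
    and "en T F \<mu>1 = en T F \<mu>2"
  shows "\<mu>1 = \<mu>2"
proof -
  interpret tnet P T F using assms(1) by unfold_locales
  show ?thesis
  proof (cases "P = {}")
    case True
    show ?thesis
    proof
      fix y show "\<mu>1 y = \<mu>2 y"
        using reach_zero_outside[OF Fsub disj assms(4,2)] reach_zero_outside[OF Fsub disj assms(5,2)] True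
        by simp
    qed
  next
    case False
    obtain x where x: "x \<in> P \<union> T" "cl = cluster P T F x" using assms(3) by (auto simp: perpetual_def)
    define t0 where "t0 = (if x \<in> T then x else qt F x)"
    have c: "mu_cl P cl = cm P F t0" "t0 \<in> T" using cluster_char[OF x(1) t0_def] x(2) by auto
    interpret tsys P T F \<mu>0 t0
      using assms(2,3) c False by unfold_locales (auto simp: perpetual_def)
    show ?thesis using lucent assms(4,5,6) by blast
  qed
qed

end
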